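(* Let $f^*$ be any maximum flow in $\mathcal{H}$ and $\mathcal{H}_{f^*}$ the residual graph. Let $V_1$ be a nonempty subset of $V$, $\Lambda_1=\{\lambda\in\Lambda:\lambda\subseteq V_1\}$, and $\mathcal{S}=\{s\}\cup V_1\cup\Lambda_1$. The following are equivalent: (1) $V_1$ induces an $h$-clique densest subgraph of $G$, i.e. $\rho_h(V_1)=\rho_h^*$; (2) $(\mathcal{S},V_\mathcal{H}\setminus\mathcal{S})$ is a minimum $s$-$t$ cut of $\mathcal{H}$; (3) there is no arc in $\mathcal{H}_{f^*}$ from a node of $\mathcal{S}$ to a node of $V_\mathcal{H}\setminus\mathcal{S}$.
   Context: Let $G=(V,E)$ be a finite simple undirected graph and $h\ge2$. An $h$-clique is a set of $h$ pairwise adjacent nodes; $\mu_h(G[W])$ counts $h$-cliques inside $W$; for nonempty $W$, $\rho_h(W)=\mu_h(G[W])/|W|$; $\rho_h^*=\max_{\emptyset\ne W\subseteq V}\rho_h(W)$; $deg_G(v,h)$ is the number of $h$-cliques containing $v$; $\Lambda$ is the set of $(h-1)$-cliques of $G$ contained in some $h$-clique. Flow network $\mathcal{H}=(V_\mathcal{H},E_\mathcal{H},c)$: $V_\mathcal{H}=V\cup\Lambda\cup\{s,t\}$; for $v\in V$: arcs $(s,v)$ cap. $deg_G(v,h)$, $(v,t)$ cap. $h\rho_h^*$, $(v,s),(t,v)$ cap. $0$; for $\lambda\in\Lambda$, $v\in\lambda$: $(\lambda,v)$ cap. $+\infty$, $(v,\lambda)$ cap. $0$; for $\lambda\in\Lambda$,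 $v\in V$ with $\lambda\cup\{v\}$ an $h$-clique: $(v,\lambda)$ cap. $1$, $(\lambda,v)$ cap. $0$; no other arcs. A flow $f$ assigns reals to arcs with $f(u,v)\le c(u,v)$, $f(v,u)=-f(u,v)$, and conservation at every node other than $s,t$; its value is $\sum_v f(s,v)$. The residual graph $\mathcal{H}_{f}$ is the directed graph on $V_\mathcal{H}$ having an arc $(u,v)$ whenever $(u,v)\in E_\mathcal{H}$ and $c(u,v)-f(u,v)>0$. Cut capacities are sums of capacities of arcs from $\mathcal{S}$ to its complement. *)

theory Defs
  imports "HOL-Library.Extended_Real"
begin

definition simple_graph :: "'a set \<Rightarrow> 'a set set \<Rightarrow> bool" where
  "simple_graph V E \<longleftrightarrow> finite V \<and> (\<forall>e\<in>E. e \<subseteq> V \<and> card e = 2)"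

definition cliques :: "'a set \<Rightarrow> 'a set set \<Rightarrow> nat \<Rightarrow> 'a set set" where
  "cliques V E h = {K. K \<subseteq> V \<and> card K = h \<and> (\<forall>u\<in>K. \<forall>v\<in>K. u \<noteq> v \<longrightarrow> {u, v} \<in> E)}"

definition mu :: "'a set \<Rightarrow> 'a set set \<Rightarrow> nat \<Rightarrow> 'a set \<Rightarrow> nat" where
  "mu V E h W = card {K \<in> cliques V E h. K \<subseteq> W}"

definition rho :: "'a set \<Rightarrow> 'a set set \<Rightarrow> nat \<Rightarrow> 'a set \<Rightarrow> real" where
  "rho V E h W = real (mu V E h W) / real (card W)"

definition rho_star :: "'a set \<Rightarrow> 'a set set \<Rightarrow> nat \<Rightarrow> real" where
  "rho_star V E h = Max (rho V E h ` {W. W \<subseteq> V \<and> W \<noteq> {}})"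

definition cdeg :: "'a set \<Rightarrow> 'a set set \<Rightarrow> nat \<Rightarrow> 'a \<Rightarrow> nat" where
  "cdeg V E h v = card {K \<in> cliques V E h. v \<in> K}"

definition Lam :: "'a set \<Rightarrow> 'a set set \<Rightarrow> nat \<Rightarrow> 'a set set" where
  "Lam V E h = {l \<in> cliques V E (h - 1). \<exists>K \<in> cliques V E h. l \<subseteq> K}"

datatype 'a fnode = Src | Snk | VN 'a | LN "'a set"

definition netV :: "'a set \<Rightarrow> 'a set set \<Rightarrow> nat \<Rightarrow> 'a fnode set" where
  "netV V E h = {Src, Snk} \<union> VN ` V \<union> LN ` Lam V E h"

definition netE :: "'a set \<Rightarrow> 'a set set \<Rightarrow> nat \<Rightarrow> ('a fnode \<times> 'a fnode) set" where
  "netE V E h =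
     {(Src, VN v) | v. v \<in> V} \<union> {(VN v, Src) | v. v \<in> V}
   \<union> {(VN v, Snk) | v. v \<in> V} \<union> {(Snk, VN v) | v. v \<in> V}
   \<union> {(LN l, VN v) | l v. l \<in> Lam V E h \<and> v \<in> l}
   \<union> {(VN v, LN l) | l v. l \<in> Lam V E h \<and> v \<in> l}
   \<union> {(VN v, LN l) | l v. l \<in> Lam V E h \<and> v \<in> V \<and> insert v l \<in> cliques V E h \<and> v \<notin> l}
   \<union> {(LN l, VN v) | l v. l \<in> Lam V E h \<and> v \<in> V \<and> insert v l \<in> cliques V E h \<and> v \<notin> l}"

text \<open>Capacities (only meaningful on arcs of netE).\<close>
definition cap :: "'a set \<Rightarrow> 'a set set \<Rightarrow> nat \<Rightarrow> 'a fnode \<Rightarrow> 'a fnode \<Rightarrow> ereal" where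
  "cap V E h u w =
     (case (u, w) of
        (Src, VN v) \<Rightarrow> ereal (real (cdeg V E h v))
      | (VN v, Snk) \<Rightarrow> ereal (real h * rho_star V E h)
      | (LN l, VN v) \<Rightarrow> (if v \<in> l then \<infinity> else 0)
      | (VN v, LN l) \<Rightarrow> (if v \<notin> l \<and> insert v l \<in> cliques V E h then 1 else 0)
      | _ \<Rightarrow> 0)"

definition is_flow :: "'a set \<Rightarrow> 'a set set \<Rightarrow> nat \<Rightarrow> ('a fnode \<Rightarrow> 'a fnode \<Rightarrow> real) \<Rightarrow> bool" where
  "is_flow V E h f \<longleftrightarrow>
     (\<forall>(u, w) \<in> netE V E h. ereal (f u w) \<le> cap V E h u w \<and> f w u = - f u w)
   \<and> (\<forall>u w. (u, w) \<notin> netE V E h \<longrightarrow> f u w = 0)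
   \<and> (\<forall>u \<in> netV V E h - {Src, Snk}. (\<Sum>w\<in>netV V E h. f u w) = 0)"

definition flow_value :: "'a set \<Rightarrow> ('a fnode \<Rightarrow> 'a fnode \<Rightarrow> real) \<Rightarrow> real" where
  "flow_value V f = (\<Sum>v\<in>V. f Src (VN v))"

definition is_max_flow :: "'a set \<Rightarrow> 'a set set \<Rightarrow> nat \<Rightarrow> ('a fnode \<Rightarrow> 'a fnode \<Rightarrow> real) \<Rightarrow> bool" where
  "is_max_flow V E h f \<longleftrightarrow> is_flow V E h f \<and>
     (\<forall>g. is_flow V E h g \<longrightarrow> flow_value V g \<le> flow_value V f)"

definition residual_arc :: "'a set \<Rightarrow> 'a set set \<Rightarrow> nat \<Rightarrow> ('a fnode \<Rightarrow> 'a fnode \<Rightarrow> real) \<Rightarrow> 'a fnode \<Rightarrow> 'a fnode \<Rightarrow> bool" where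
  "residual_arc V E h f u w \<longleftrightarrow> (u, w) \<in> netE V E h \<and> cap V E h u w - ereal (f u w) > 0"

definition is_st_cut :: "'a set \<Rightarrow> 'a set set \<Rightarrow> nat \<Rightarrow> 'a fnode set \<Rightarrow> bool" where
  "is_st_cut V E h X \<longleftrightarrow> X \<subseteq> netV V E h \<and> Src \<in> X \<and> Snk \<notin> X"

definition cut_cap :: "'a set \<Rightarrow> 'a set set \<Rightarrow> nat \<Rightarrow> 'a fnode set \<Rightarrow> ereal" where
  "cut_cap V E h X = (\<Sum>(u, w) \<in> {(u, w) \<in> netE V E h. u \<in> X \<and> w \<notin> X}. cap V E h u w)"

definition is_min_st_cut :: "'a set \<Rightarrow> 'a set set \<Rightarrow> nat \<Rightarrow> 'a fnode set \<Rightarrow> bool" where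
  "is_min_st_cut V E h X \<longleftrightarrow> is_st_cut V E h X \<and>
     (\<forall>Y. is_st_cut V E h Y \<longrightarrow> cut_cap V E h X \<le> cut_cap V E h Y)"

end

theory Submission
  imports Defs
begin



locale net =
  fixes V :: "'a set" and E :: "'a set set" and h :: nat
  assumes G: "simple_graph V E" and h2: "h \<ge> 2" and Vne: "V \<noteq> {}"
begin

lemma finV: "finite V" using G by (simp add: simple_graph_def)

lemma cl_sub: "K \<in> cliques V E h \<Longrightarrow> K \<subseteq> V \<and> card K = h"
  by (simp add: cliques_def)

lemma fin_cl: "finite (cliques V E h)"
proof -
  have "cliques V E h \<subseteq> Pow V" by (auto simp: cliques_def)
  then show ?thesis using finV finite_subset by blast
qed

lemma Lam_sub: "l \<in> Lam V E h \<Longrightarrow> l \<subseteq> V"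
  by (simp add: Lam_def cliques_def)

lemma fin_Lam: "finite (Lam V E h)"
proof -
  have "Lam V E h \<subseteq> Pow V" using Lam_sub by auto
  then show ?thesis using finV finite_subset by blast
qed

lemma fin_netV: "finite (netV V E h)"
  using finV fin_Lam by (simp add: netV_def)

lemma netE_sym: "(u, w) \<in> netE V E h \<Longrightarrow> (w, u) \<in> netE V E h"
  unfolding netE_def by blast

lemma netE_sub: "(u, w) \<in> netE V E h \<Longrightarrow> u \<in> netV V E h \<and> w \<in> netV V E h"
  unfolding netE_def netV_def using Lam_sub by blast

lemma fin_netE: "finite (netE V E h)"
proof -
  have "netE V E h \<subseteq> netV V E h \<times> netV V E h" using netE_sub by auto
  then show ?thesis using fin_netV finite_subset by blast
qed

lemma fin_W: "finite {W. W \<subseteq> V \<and> W \<noteq> {}}"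
  using finV by simp

lemma rho_le: "A \<subseteq> V \<Longrightarrow> A \<noteq> {} \<Longrightarrow> rho V E h A \<le> rho_star V E h"
  unfolding rho_star_def using fin_W by (intro Max_ge) auto

lemma rho_nonneg: "rho V E h A \<ge> 0" by (simp add: rho_def)

lemma rho_star_nonneg: "rho_star V E h \<ge> 0"
  using rho_le[of V] Vne rho_nonneg[of V] by auto

lemma mu_empty: "mu V E h {} = 0"
  using h2 by (auto simp: mu_def cliques_def)

lemma mu_le: "A \<subseteq> V \<Longrightarrow> real (mu V E h A) \<le> real (card A) * rho_star V E h"
proof (cases "A = {}")
  case True then show ?thesis by (simp add: mu_empty)
next
  case False
  assume "A \<subseteq> V"
  then have "finite A" using finV finite_subset by blast
  with False have c: "real (card A) > 0" by auto
  have "rho V E h A \<le> rho_star V E h" using rho_le \<open>A \<subseteq> V\<close> False by blast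
  then show ?thesis using c by (simp add: rho_def field_simps)
qed

lemma cap_nonneg: "cap V E h u w \<ge> 0"
  using rho_star_nonneg
  by (auto simp: cap_def split: fnode.splits)

lemma flow_skew:
  assumes "is_flow V E h f" shows "f w u = - f u w"
proof (cases "(u, w) \<in> netE V E h")
  case True then show ?thesis using assms by (auto simp: is_flow_def)
next
  case False
  then have "(w, u) \<notin> netE V E h" using netE_sym by blast
  then show ?thesis using False assms by (auto simp: is_flow_def)
qed

definition crossing :: "'a fnode set \<Rightarrow> ('a fnode \<times> 'a fnode) set" where
  "crossing Y = {(u, w) \<in> netE V E h. u \<in> Y \<and> w \<notin> Y}"

lemma fin_crossing: "finite (crossing Y)"
  by (rule finite_subset[OF _ fin_netE]) (auto simp: crossing_def)

lemma cut_cap_eq: "cut_cap V E h Y = (\<Sum>(u,w)\<in>crossing Y. cap V E h u w)"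
  by (simp add: cut_cap_def crossing_def)

lemma flow_value_cut:
  assumes f: "is_flow V E h f" and Y: "is_st_cut V E h Y"
  shows "flow_value V f = (\<Sum>(u,w)\<in>crossing Y. f u w)"
proof -
  let ?N = "netV V E h"
  have YN: "Y \<subseteq> ?N" and sY: "Src \<in> Y" and tY: "Snk \<notin> Y" using Y by (auto simp: is_st_cut_def)
  have finY: "finite Y" using YN fin_netV finite_subset by blast
  have cons: "\<And>u. u \<in> Y - {Src} \<Longrightarrow> (\<Sum>w\<in>?N. f u w) = 0"
    using f YN tY by (auto simp: is_flow_def)
  have "(\<Sum>u\<in>Y. \<Sum>w\<in>?N. f u w) = (\<Sum>w\<in>?N. f Src w) + (\<Sum>u\<in>Y - {Src}. \<Sum>w\<in>?N. f u w)"
    using finY sY by (simp add: sum.remove)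
  also have "(\<Sum>u\<in>Y - {Src}. \<Sum>w\<in>?N. f u w) = 0" using cons by simp
  also have "(\<Sum>w\<in>?N. f Src w) = (\<Sum>w\<in>VN ` V. f Src w)"
  proof (rule sum.mono_neutral_right)
    show "finite ?N" by (rule fin_netV)
    show "VN ` V \<subseteq> ?N" by (auto simp: netV_def)
    show "\<forall>i\<in>?N - VN ` V. f Src i = 0"
    proof
      fix i assume "i \<in> ?N - VN ` V"
      then have "(Src, i) \<notin> netE V E h" by (auto simp: netE_def)
      then show "f Src i = 0" using f by (auto simp: is_flow_def)
    qed
  qed
  also have "\<dots> = flow_value V f"
    by (simp add: flow_value_def sum.reindex inj_on_def)
  finally have 1: "(\<Sum>u\<in>Y. \<Sum>w\<in>?N. f u w) = flow_value V f" by simp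
  have split: "?N = Y \<union> (?N - Y)" using YN by blast
  have 2: "(\<Sum>u\<in>Y. \<Sum>w\<in>?N. f u w) = (\<Sum>u\<in>Y. \<Sum>w\<in>Y. f u w) + (\<Sum>u\<in>Y. \<Sum>w\<in>?N - Y. f u w)"
  proof -
    have "\<And>u. (\<Sum>w\<in>?N. f u w) = (\<Sum>w\<in>Y. f u w) + (\<Sum>w\<in>?N - Y. f u w)"
      using fin_netV YN by (metis sum.subset_diff add.commute)
    then have "(\<Sum>u\<in>Y. \<Sum>w\<in>?N. f u w) = (\<Sum>u\<in>Y. (\<Sum>w\<in>Y. f u w) + (\<Sum>w\<in>?N - Y. f u w))"
      by (intro sum.cong) auto
    then show ?thesis by (simp only: sum.distrib)
  qed
  have "(\<Sum>u\<in>Y. \<Sum>w\<in>Y. f u w) = (\<Sum>w\<in>Y. \<Sum>u\<in>Y. f u w)" by (rule sum.swap)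
  also have "\<dots> = (\<Sum>w\<in>Y. \<Sum>u\<in>Y. - f w u)" by (intro sum.cong refl) (rule flow_skew[OF f])
  also have "\<dots> = - (\<Sum>u\<in>Y. \<Sum>w\<in>Y. f u w)" by (simp add: sum_negf)
  finally have 3: "(\<Sum>u\<in>Y. \<Sum>w\<in>Y. f u w) = 0" by simp
  have "(\<Sum>u\<in>Y. \<Sum>w\<in>?N - Y. f u w) = (\<Sum>(u,w)\<in>Y \<times> (?N - Y). f u w)"
    by (simp add: sum.cartesian_product)
  also have "\<dots> = (\<Sum>(u,w)\<in>crossing Y. f u w)"
  proof (rule sum.mono_neutral_right)
    show "finite (Y \<times> (?N - Y))" using finY fin_netV by simp
    show "crossing Y \<subseteq> Y \<times> (?N - Y)" using netE_sub by (auto simp: crossing_def)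
    show "\<forall>i\<in>Y \<times> (?N - Y) - crossing Y. (case i of (u, w) \<Rightarrow> f u w) = 0"
      using f by (auto simp: crossing_def is_flow_def)
  qed
  finally show ?thesis using 1 2 3 by simp
qed

end



lemma rtrancl_distinct_path:
  assumes "(a, b) \<in> r\<^sup>*"
  shows "\<exists>p. p \<noteq> [] \<and> hd p = a \<and> last p = b \<and> distinct p \<and>
             (\<forall>i. Suc i < length p \<longrightarrow> (p ! i, p ! Suc i) \<in> r)"
  using assms
proof (induction rule: converse_rtrancl_induct)
  case base
  then show ?case by (intro exI[of _ "[b]"]) auto
next
  case (step a a')
  then obtain p where p: "p \<noteq> []" "hd p = a'" "last p = b" "distinct p"
    "\<forall>i. Suc i < length p \<longrightarrow> (p ! i, p ! Suc i) \<in> r" by blast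
  show ?case
  proof (cases "a \<in> set p")
    case True
    then obtain i where i: "i < length p" "p ! i = a" by (auto simp: in_set_conv_nth)
    show ?thesis
      using i p by (intro exI[of _ "drop i p"]) (auto simp: hd_drop_conv_nth)
  next
    case False
    have "\<forall>i. Suc i < length (a # p) \<longrightarrow> ((a # p) ! i, (a # p) ! Suc i) \<in> r"
    proof (intro allI impI)
      fix i assume "Suc i < length (a # p)"
      then show "((a # p) ! i, (a # p) ! Suc i) \<in> r"
        using p step(1) by (cases i) (auto simp: hd_conv_nth)
    qed
    then show ?thesis using p False by (intro exI[of _ "a # p"]) auto
  qed
qed

definition parcs :: "'b list \<Rightarrow> ('b \<times> 'b) set" where
  "parcs p = {(p ! i, p ! Suc i) | i. Suc i < length p}"

lemma parcs_out:
  assumes "distinct p" "i < length p"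
  shows "(p ! i, w) \<in> parcs p \<longleftrightarrow> Suc i < length p \<and> w = p ! Suc i"
  using assms by (auto simp: parcs_def nth_eq_iff_index_eq)

lemma parcs_in:
  assumes "distinct p" "i < length p"
  shows "(w, p ! i) \<in> parcs p \<longleftrightarrow> 0 < i \<and> w = p ! (i - 1)"
proof
  assume "(w, p ! i) \<in> parcs p"
  then obtain j where j: "Suc j < length p" "w = p ! j" "p ! Suc j = p ! i" by (auto simp: parcs_def)
  then have "Suc j = i" using assms nth_eq_iff_index_eq by metis
  then show "0 < i \<and> w = p ! (i - 1)" using j by auto
next
  assume "0 < i \<and> w = p ! (i - 1)"
  then show "(w, p ! i) \<in> parcs p" using assms unfolding parcs_def
    by (intro CollectI exI[of _ "i - 1"]) auto
qed

lemma parcs_notin: "u \<notin> set p \<Longrightarrow> (u, w) \<notin> parcs p \<and> (w, u) \<notin> parcs p"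
  by (auto simp: parcs_def)

lemma parcs_antisym: "distinct p \<Longrightarrow> (u, w) \<in> parcs p \<Longrightarrow> (w, u) \<notin> parcs p"
  by (auto simp: parcs_def nth_eq_iff_index_eq)

lemma finite_parcs: "finite (parcs p)"
proof -
  have "parcs p = (\<lambda>i. (p ! i, p ! Suc i)) ` {i. Suc i < length p}" by (auto simp: parcs_def)
  moreover have "finite {i. Suc i < length p}"
    by (rule finite_subset[of _ "{..<length p}"]) auto
  ultimately show ?thesis by simp
qed




context net begin

lemma cap_fin: "cap V E h u w \<noteq> \<infinity> \<Longrightarrow> cap V E h u w = ereal (real_of_ereal (cap V E h u w))"
  using cap_nonneg[of u w] by (cases "cap V E h u w") auto

lemma flow_cap: "is_flow V E h f \<Longrightarrow> (u, w) \<in> netE V E h \<Longrightarrow> ereal (f u w) \<le> cap V E h u w"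
  unfolding is_flow_def by blast

lemma flow_off: "is_flow V E h f \<Longrightarrow> (u, w) \<notin> netE V E h \<Longrightarrow> f u w = 0"
  unfolding is_flow_def by blast

lemma flow_cons: "is_flow V E h f \<Longrightarrow> u \<in> netV V E h - {Src, Snk} \<Longrightarrow> (\<Sum>w\<in>netV V E h. f u w) = 0"
  unfolding is_flow_def by blast

lemma no_aug:
  assumes mf: "is_max_flow V E h f"
  shows "(Src, Snk) \<notin> {(u, w). residual_arc V E h f u w}\<^sup>*"
proof
  assume "(Src, Snk) \<in> {(u, w). residual_arc V E h f u w}\<^sup>*"
  from rtrancl_distinct_path[OF this] obtain p where p0': "p \<noteq> []" "hd p = Src" "last p = Snk" "distinct p"
    "\<forall>i. Suc i < length p \<longrightarrow> (p ! i, p ! Suc i) \<in> {(u, w). residual_arc V E h f u w}"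
    by blast
  have p: "p \<noteq> []" "hd p = Src" "last p = Snk" "distinct p"
    "\<And>i. Suc i < length p \<Longrightarrow> residual_arc V E h f (p ! i) (p ! Suc i)"
    using p0' by auto
  have f: "is_flow V E h f" using mf by (simp add: is_max_flow_def)
  let ?N = "netV V E h"
  let ?P = "parcs p"
  have len: "2 \<le> length p"
  proof (rule ccontr)
    assume "\<not> 2 \<le> length p"
    moreover have "length p \<noteq> 0" using p(1) by simp
    ultimately have "length p = 1" by linarith
    then have "hd p = last p" by (cases p) auto
    then show False using p by simp
  qed
  have p0: "p ! 0 = Src" using p by (simp add: hd_conv_nth)
  have pl: "p ! (length p - 1) = Snk" using p by (simp add: last_conv_nth)
  have Pres: "\<And>u w. (u, w) \<in> ?P \<Longrightarrow> residual_arc V E h f u w"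
    using p(5) by (auto simp: parcs_def)
  have PE: "\<And>u w. (u, w) \<in> ?P \<Longrightarrow> (u, w) \<in> netE V E h"
    using Pres by (auto simp: residual_arc_def)
  have pN: "\<And>k. k < length p \<Longrightarrow> p ! k \<in> ?N"
  proof -
    fix k assume k: "k < length p"
    show "p ! k \<in> ?N"
    proof (cases "Suc k < length p")
      case True
      then have "(p ! k, p ! Suc k) \<in> netE V E h" using p(5) by (simp add: residual_arc_def)
      then show ?thesis using netE_sub by blast
    next
      case False
      then have "k = Suc (k - 1)" "Suc (k - 1) < length p" using k len by auto
      then have "(p ! (k - 1), p ! k) \<in> netE V E h" using p(5)[of "k - 1"] by (simp add: residual_arc_def)
      then show ?thesis using netE_sub by blast
    qed
  qed
  define r where "r u w = (if cap V E h u w = \<infinity> then 1 else real_of_ereal (cap V E h u w) - f u w)" for u w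
  have rpos: "\<And>u w. (u, w) \<in> ?P \<Longrightarrow> r u w > 0"
  proof -
    fix u w assume "(u, w) \<in> ?P"
    then have res: "cap V E h u w - ereal (f u w) > 0" using Pres by (simp add: residual_arc_def)
    show "r u w > 0"
    proof (cases "cap V E h u w = \<infinity>")
      case True then show ?thesis by (simp add: r_def)
    next
      case False
      then have "cap V E h u w = ereal (real_of_ereal (cap V E h u w))" by (rule cap_fin)
      then obtain c where c: "cap V E h u w = ereal c" by blast
      then have "c - f u w > 0" using res by simp
      then show ?thesis using c by (simp add: r_def)
    qed
  qed
  have P0: "(p ! 0, p ! 1) \<in> ?P" using len unfolding parcs_def by force
  define eps where "eps = Min ((\<lambda>(u, w). r u w) ` ?P)"
  have Pne: "?P \<noteq> {}" using P0 by blast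
  have eps_pos: "eps > 0" unfolding eps_def using finite_parcs Pne rpos by (subst Min_gr_iff) auto
  have eps_le: "eps \<le> r u w" if uwP: "(u, w) \<in> ?P" for u w
  proof -
    have "r u w \<in> (\<lambda>(u, w). r u w) ` ?P" using uwP by force
    then show ?thesis unfolding eps_def using finite_parcs by (intro Min_le) auto
  qed
  define g where "g u w = f u w + eps * ((if (u, w) \<in> ?P then 1 else 0) - (if (w, u) \<in> ?P then 1 else 0))" for u w
  have g_cap: "\<And>u w. (u, w) \<in> netE V E h \<Longrightarrow> ereal (g u w) \<le> cap V E h u w"
  proof -
    fix u w assume uw: "(u, w) \<in> netE V E h"
    have fc: "ereal (f u w) \<le> cap V E h u w" using flow_cap[OF f uw] .
    show "ereal (g u w) \<le> cap V E h u w"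
    proof (cases "(u, w) \<in> ?P")
      case True
      have "(w, u) \<notin> ?P" by (rule parcs_antisym[OF p(4) True])
      then have gd: "g u w = f u w + eps" using True by (simp add: g_def)
      show ?thesis
      proof (cases "cap V E h u w = \<infinity>")
        case True then show ?thesis by simp
      next
        case False
        obtain c where c: "cap V E h u w = ereal c" by (rule that[OF cap_fin[OF False]])
        have "eps \<le> c - f u w" using eps_le[OF True] False c by (simp add: r_def)
        then show ?thesis using gd c by simp
      qed
    next
      case False
      then have "g u w \<le> f u w" using eps_pos by (simp add: g_def)
      then have "ereal (g u w) \<le> ereal (f u w)" by simp
      then show ?thesis using fc by (rule order_trans)
    qed
  qed
  have g_skew: "g w u = - g u w" for u w
    unfolding g_def using flow_skew[OF f, of w u] by (simp add: algebra_simps)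
  have g_off: "\<And>u w. (u, w) \<notin> netE V E h \<Longrightarrow> g u w = 0"
  proof -
    fix u w assume "(u, w) \<notin> netE V E h"
    moreover then have "(u, w) \<notin> ?P" "(w, u) \<notin> ?P" using PE netE_sym by blast+
    ultimately show "g u w = 0" using flow_off[OF f] by (simp add: g_def)
  qed
  have D0: "(\<Sum>w\<in>?N. (if (u, w) \<in> ?P then 1 else 0) - (if (w, u) \<in> ?P then 1 else 0) :: real) = 0"
    if u: "u \<in> ?N - {Src, Snk}" for u
  proof (cases "u \<in> set p")
    case False
    then show ?thesis using parcs_notin[OF False] by simp
  next
    case True
    then obtain i where i: "i < length p" "p ! i = u" by (auto simp: in_set_conv_nth)
    have i0: "0 < i" using i u p0 by (cases i) auto
    have il: "Suc i < length p" using i u pl by (metis Suc_lessI diff_Suc_1 DiffE insertCI)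
    have "(\<Sum>w\<in>?N. (if (u, w) \<in> ?P then 1 else 0) - (if (w, u) \<in> ?P then 1 else 0) :: real)
        = (\<Sum>w\<in>?N. (if w = p ! Suc i then 1 else 0) - (if w = p ! (i - 1) then 1 else 0))"
      using parcs_out[OF p(4) i(1)] parcs_in[OF p(4) i(1)] i il i0 by (intro sum.cong) auto
    also have "\<dots> = 0" using pN il i by (simp add: sum_subtractf fin_netV)
    finally show ?thesis .
  qed
  have g_cons: "\<And>u. u \<in> ?N - {Src, Snk} \<Longrightarrow> (\<Sum>w\<in>?N. g u w) = 0"
  proof -
    fix u assume u: "u \<in> ?N - {Src, Snk}"
    have "(\<Sum>w\<in>?N. g u w) = (\<Sum>w\<in>?N. f u w) + eps * (\<Sum>w\<in>?N. (if (u, w) \<in> ?P then 1 else 0) - (if (w, u) \<in> ?P then 1 else 0))"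
      unfolding g_def by (simp add: sum.distrib sum_distrib_left)
    also have "\<dots> = 0" using D0[OF u] flow_cons[OF f u] by simp
    finally show "(\<Sum>w\<in>?N. g u w) = 0" .
  qed
  have gflow: "is_flow V E h g"
    unfolding is_flow_def
  proof (intro conjI)
    show "\<forall>(u, w)\<in>netE V E h. ereal (g u w) \<le> cap V E h u w \<and> g w u = - g u w"
    proof
      fix x assume "x \<in> netE V E h"
      then obtain u w where "x = (u, w)" "(u, w) \<in> netE V E h" by (cases x) auto
      then show "case x of (u, w) \<Rightarrow> ereal (g u w) \<le> cap V E h u w \<and> g w u = - g u w"
        using g_cap[of u w] g_skew[of u w] by simp
    qed
    show "\<forall>u w. (u, w) \<notin> netE V E h \<longrightarrow> g u w = 0" using g_off by blast
    show "\<forall>u\<in>netV V E h - {Src, Snk}. sum (g u) (netV V E h) = 0" using g_cons by blast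
  qed
  obtain v0 where v0: "p ! 1 = VN v0" "v0 \<in> V"
    using PE[OF P0] p0 by (auto simp: netE_def)
  have "flow_value V g = (\<Sum>v\<in>V. f Src (VN v) + eps * (if v = v0 then 1 else 0))"
    unfolding flow_value_def g_def
  proof (intro sum.cong refl)
    fix v assume "v \<in> V"
    have "(Src, VN v) \<in> ?P \<longleftrightarrow> v = v0"
      using parcs_out[OF p(4), of 0 "VN v"] len p0 v0 p(1) by auto
    moreover have "(VN v, Src) \<notin> ?P"
      using parcs_in[OF p(4), of 0 "VN v"] len p0 p(1) by auto
    ultimately show "f Src (VN v) + eps * ((if (Src, VN v) \<in> ?P then 1 else 0) - (if (VN v, Src) \<in> ?P then 1 else 0))
        = f Src (VN v) + eps * (if v = v0 then 1 else 0)" by simp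
  qed
  also have "\<dots> = flow_value V f + eps"
    using v0 finV by (simp add: sum.distrib flow_value_def sum_distrib_left[symmetric] sum.delta)
  finally have "flow_value V g > flow_value V f" using eps_pos by simp
  then show False using mf gflow by (auto simp: is_max_flow_def)
qed

end



context net begin

lemma sat_cut:
  assumes f: "is_flow V E h f" and Y: "is_st_cut V E h Y"
    and nr: "\<not> (\<exists>u\<in>Y. \<exists>w\<in>netV V E h - Y. residual_arc V E h f u w)"
  shows "cut_cap V E h Y = ereal (flow_value V f)"
proof -
  have eq: "cap V E h u w = ereal (f u w)" if uw: "(u, w) \<in> crossing Y" for u w
  proof -
    have E: "(u, w) \<in> netE V E h" and u: "u \<in> Y" and w: "w \<notin> Y" using uw by (auto simp: crossing_def)
    have "w \<in> netV V E h" using netE_sub[OF E] by blast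
    then have nres: "\<not> residual_arc V E h f u w" using nr u w by blast
    have fc: "ereal (f u w) \<le> cap V E h u w" by (rule flow_cap[OF f E])
    show ?thesis
    proof (cases "cap V E h u w = \<infinity>")
      case True then show ?thesis using nres E by (simp add: residual_arc_def)
    next
      case False
      obtain c where c: "cap V E h u w = ereal c" by (rule that[OF cap_fin[OF False]])
      have "\<not> c - f u w > 0" using nres E c by (simp add: residual_arc_def)
      moreover have "f u w \<le> c" using fc c by simp
      ultimately show ?thesis using c by simp
    qed
  qed
  have "cut_cap V E h Y = (\<Sum>(u, w)\<in>crossing Y. ereal (f u w))"
    unfolding cut_cap_eq by (intro sum.cong refl) (auto simp: eq)
  also have "\<dots> = ereal (\<Sum>(u, w)\<in>crossing Y. f u w)"
    by (simp add: case_prod_beta)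
  also have "\<dots> = ereal (flow_value V f)" using flow_value_cut[OF f Y] by simp
  finally show ?thesis .
qed

lemma weak_dual:
  assumes f: "is_flow V E h f" and Y: "is_st_cut V E h Y"
  shows "ereal (flow_value V f) \<le> cut_cap V E h Y"
proof -
  have "ereal (flow_value V f) = (\<Sum>(u, w)\<in>crossing Y. ereal (f u w))"
    using flow_value_cut[OF f Y] by (simp add: case_prod_beta)
  also have "\<dots> \<le> (\<Sum>(u, w)\<in>crossing Y. cap V E h u w)"
    by (intro sum_mono) (auto simp: crossing_def intro: flow_cap[OF f])
  finally show ?thesis by (simp add: cut_cap_eq)
qed

lemma maxflow_cut:
  assumes mf: "is_max_flow V E h f"
  shows "\<exists>R. is_st_cut V E h R \<and> cut_cap V E h R = ereal (flow_value V f)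
      \<and> \<not> (\<exists>u\<in>R. \<exists>w\<in>netV V E h - R. residual_arc V E h f u w)"
proof -
  let ?r = "{(u, w). residual_arc V E h f u w}"
  define R where "R = {w. (Src, w) \<in> ?r\<^sup>*}"
  have f: "is_flow V E h f" using mf by (simp add: is_max_flow_def)
  have RN: "R \<subseteq> netV V E h"
  proof
    fix w assume "w \<in> R"
    then have "(Src, w) \<in> ?r\<^sup>*" by (simp add: R_def)
    then show "w \<in> netV V E h"
    proof (induction rule: rtrancl_induct)
      case base then show ?case by (simp add: netV_def)
    next
      case (step y z)
      then have "(y, z) \<in> netE V E h" by (simp add: residual_arc_def)
      then show ?case using netE_sub by blast
    qed
  qed
  have cut: "is_st_cut V E h R"
    using RN no_aug[OF mf] by (auto simp: is_st_cut_def R_def)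
  have nr: "\<not> (\<exists>u\<in>R. \<exists>w\<in>netV V E h - R. residual_arc V E h f u w)"
  proof
    assume "\<exists>u\<in>R. \<exists>w\<in>netV V E h - R. residual_arc V E h f u w"
    then obtain u w where "u \<in> R" "w \<notin> R" "residual_arc V E h f u w" by blast
    then have "(Src, u) \<in> ?r\<^sup>*" "(u, w) \<in> ?r" "w \<notin> R" by (auto simp: R_def)
    from this(1,2) have "(Src, w) \<in> ?r\<^sup>*" by (rule rtrancl.rtrancl_into_rtrancl)
    then show False using \<open>w \<notin> R\<close> by (simp add: R_def)
  qed
  show ?thesis using cut nr sat_cut[OF f cut nr] by blast
qed

lemma cut23:
  assumes mf: "is_max_flow V E h f" and S: "is_st_cut V E h S"
  shows "is_min_st_cut V E h S \<longleftrightarrow> \<not> (\<exists>u\<in>S. \<exists>w\<in>netV V E h - S. residual_arc V E h f u w)"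
proof
  have f: "is_flow V E h f" using mf by (simp add: is_max_flow_def)
  assume "\<not> (\<exists>u\<in>S. \<exists>w\<in>netV V E h - S. residual_arc V E h f u w)"
  then have "cut_cap V E h S = ereal (flow_value V f)" by (rule sat_cut[OF f S])
  then show "is_min_st_cut V E h S"
    unfolding is_min_st_cut_def using S weak_dual[OF f] by auto
next
  have f: "is_flow V E h f" using mf by (simp add: is_max_flow_def)
  assume min: "is_min_st_cut V E h S"
  obtain R where R: "is_st_cut V E h R" "cut_cap V E h R = ereal (flow_value V f)"
    using maxflow_cut[OF mf] by blast
  have le: "cut_cap V E h S \<le> ereal (flow_value V f)"
  proof -
    have "cut_cap V E h S \<le> cut_cap V E h R" using min R(1) unfolding is_min_st_cut_def by blast
    then show ?thesis using R(2) by simp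
  qed
  show "\<not> (\<exists>u\<in>S. \<exists>w\<in>netV V E h - S. residual_arc V E h f u w)"
  proof
    assume "\<exists>u\<in>S. \<exists>w\<in>netV V E h - S. residual_arc V E h f u w"
    then obtain u w where u: "u \<in> S" and w: "w \<in> netV V E h - S" and res: "residual_arc V E h f u w" by blast
    have E: "(u, w) \<in> netE V E h" using res by (simp add: residual_arc_def)
    have uwC: "(u, w) \<in> crossing S" using E u w by (simp add: crossing_def)
    show False
    proof (cases "cap V E h u w = \<infinity>")
      case True
      have "cut_cap V E h S = \<infinity>" unfolding cut_cap_eq
        unfolding sum_Pinfty using fin_crossing uwC True by (intro conjI bexI[of _ "(u, w)"]) auto
      then show False using le by simp
    next
      case False
      obtain c where c: "cap V E h u w = ereal c" by (rule that[OF cap_fin[OF False]])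
      have cf: "f u w < c" using res c by (simp add: residual_arc_def)
      let ?C = "crossing S - {(u, w)}"
      have "cut_cap V E h S = cap V E h u w + (\<Sum>(x, y)\<in>?C. cap V E h x y)"
        unfolding cut_cap_eq using fin_crossing uwC by (simp add: sum.remove)
      also have "\<dots> \<ge> ereal c + (\<Sum>(x, y)\<in>?C. ereal (f x y))"
        unfolding c by (intro add_left_mono sum_mono) (auto simp: crossing_def intro: flow_cap[OF f])
      finally have ge: "cut_cap V E h S \<ge> ereal (c + (\<Sum>(x, y)\<in>?C. f x y))"
        by (simp add: case_prod_beta)
      have "flow_value V f = f u w + (\<Sum>(x, y)\<in>?C. f x y)"
        using flow_value_cut[OF f S] fin_crossing uwC by (simp add: sum.remove)
      then have "c + (\<Sum>(x, y)\<in>?C. f x y) > flow_value V f" using cf by simp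
      moreover have "ereal (c + (\<Sum>(x, y)\<in>?C. f x y)) \<le> ereal (flow_value V f)"
        using ge le by (rule order_trans)
      ultimately show False by simp
    qed
  qed
qed

end



context net begin

definition Iout :: "'a set \<Rightarrow> ('a \<times> 'a set) set" where
  "Iout A = {(v, K). K \<in> cliques V E h \<and> v \<in> K \<and> v \<notin> A}"
definition Imix :: "'a set \<Rightarrow> ('a \<times> 'a set) set" where
  "Imix A = {(v, K). K \<in> cliques V E h \<and> v \<in> K \<and> v \<in> A \<and> \<not> K \<subseteq> A}"
definition Iin :: "'a set \<Rightarrow> ('a \<times> 'a set) set" where
  "Iin A = {(v, K). K \<in> cliques V E h \<and> v \<in> K \<and> K \<subseteq> A}"

lemma fin_I: "finite (Iout A)" "finite (Imix A)" "finite (Iin A)"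
proof -
  have sub: "Iout A \<subseteq> V \<times> cliques V E h" "Imix A \<subseteq> V \<times> cliques V E h" "Iin A \<subseteq> V \<times> cliques V E h"
    using cl_sub by (auto simp: Iout_def Imix_def Iin_def)
  have "finite (V \<times> cliques V E h)" using finV fin_cl by simp
  then show "finite (Iout A)" "finite (Imix A)" "finite (Iin A)"
    using sub by (auto intro: finite_subset[of _ "V \<times> cliques V E h"])
qed

lemma card_Iin: "card (Iin A) = h * mu V E h A"
proof -
  let ?Q = "{K \<in> cliques V E h. K \<subseteq> A}"
  have eq: "Iin A = (\<lambda>(K, v). (v, K)) ` (SIGMA K:?Q. K)"
    by (auto simp: Iin_def image_iff)
  have inj: "inj_on (\<lambda>(K, v). (v, K)) (SIGMA K:?Q. K)" by (auto simp: inj_on_def)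
  have finQ: "finite ?Q" using fin_cl by simp
  have finK: "\<forall>K\<in>?Q. finite K"
  proof
    fix K assume "K \<in> ?Q"
    then have "K \<subseteq> V" using cl_sub by simp
    then show "finite K" using finV by (rule finite_subset)
  qed
  have "card (Iin A) = card (SIGMA K:?Q. K)" unfolding eq using inj by (rule card_image)
  also have "\<dots> = (\<Sum>K\<in>?Q. card K)" using finQ finK by simp
  also have "\<dots> = (\<Sum>K\<in>?Q. h)" using cl_sub by (intro sum.cong) auto
  also have "\<dots> = h * mu V E h A" by (simp add: mu_def)
  finally show ?thesis .
qed

lemma card_Iout: "card (Iout A) = (\<Sum>v\<in>V - A. cdeg V E h v)"
proof -
  have eq: "Iout A = (SIGMA v:V - A. {K \<in> cliques V E h. v \<in> K})"
    using cl_sub by (auto simp: Iout_def)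
  have "card (Iout A) = (\<Sum>v\<in>V - A. card {K \<in> cliques V E h. v \<in> K})"
    unfolding eq using finV fin_cl by simp
  then show ?thesis by (simp add: cdeg_def)
qed

lemma card_split: "card (Iout A) + card (Imix A) + card (Iin A) = h * mu V E h V"
proof -
  have "Iin V = Iout A \<union> Imix A \<union> Iin A"
    using cl_sub by (auto simp: Iout_def Imix_def Iin_def)
  moreover have "Iout A \<inter> Imix A = {}" "(Iout A \<union> Imix A) \<inter> Iin A = {}"
    by (auto simp: Iout_def Imix_def Iin_def)
  ultimately have "card (Iin V) = card (Iout A) + card (Imix A) + card (Iin A)"
    using fin_I by (simp add: card_Un_disjoint)
  then show ?thesis using card_Iin by simp
qed

lemma clique_remove:
  assumes K: "K \<in> cliques V E h" and v: "v \<in> K"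
  shows "K - {v} \<in> Lam V E h"
proof -
  have fK: "finite K" using cl_sub[OF K] finV by (auto intro: finite_subset)
  have "K - {v} \<in> cliques V E (h - 1)"
    using K v fK by (auto simp: cliques_def)
  then show ?thesis using K by (auto simp: Lam_def)
qed

end



context net begin

lemma netE_src: "v \<in> V \<Longrightarrow> (Src, VN v) \<in> netE V E h" by (simp add: netE_def)
lemma netE_snk: "v \<in> V \<Longrightarrow> (VN v, Snk) \<in> netE V E h" by (simp add: netE_def)
lemma netE_vl: "l \<in> Lam V E h \<Longrightarrow> v \<in> V \<Longrightarrow> insert v l \<in> cliques V E h \<Longrightarrow> v \<notin> l \<Longrightarrow> (VN v, LN l) \<in> netE V E h"
  by (simp add: netE_def)
lemma netE_lv: "l \<in> Lam V E h \<Longrightarrow> v \<in> l \<Longrightarrow> (LN l, VN v) \<in> netE V E h"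
  by (simp add: netE_def)

lemma netE_E:
  assumes "(u, w) \<in> netE V E h"
  obtains (sv) v where "u = Src" "w = VN v" "v \<in> V"
  | (vs) v where "u = VN v" "w = Src" "v \<in> V"
  | (vt) v where "u = VN v" "w = Snk" "v \<in> V"
  | (tv) v where "u = Snk" "w = VN v" "v \<in> V"
  | (lv) l v where "u = LN l" "w = VN v" "l \<in> Lam V E h" "v \<in> l"
  | (vl0) l v where "u = VN v" "w = LN l" "l \<in> Lam V E h" "v \<in> l"
  | (vl) l v where "u = VN v" "w = LN l" "l \<in> Lam V E h" "v \<in> V" "insert v l \<in> cliques V E h" "v \<notin> l"
  | (lv0) l v where "u = LN l" "w = VN v" "l \<in> Lam V E h" "v \<notin> l"
  using assms unfolding netE_def by auto

lemma cap_nonneg': "0 \<le> (case x of (u, w) \<Rightarrow> cap V E h u w)"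
  by (cases x) (simp add: cap_nonneg)

lemma sum_T1: "(\<Sum>(u, w)\<in>(\<lambda>v. (Src, VN v)) ` (V - A). cap V E h u w) = ereal (real (card (Iout A)))"
proof -
  have "(\<Sum>(u, w)\<in>(\<lambda>v. (Src, VN v)) ` (V - A). cap V E h u w) = (\<Sum>v\<in>V - A. cap V E h Src (VN v))"
    by (subst sum.reindex) (auto simp: inj_on_def)
  also have "\<dots> = (\<Sum>v\<in>V - A. ereal (real (cdeg V E h v)))" by (simp add: cap_def)
  also have "\<dots> = ereal (real (card (Iout A)))" by (simp add: card_Iout)
  finally show ?thesis .
qed

lemma sum_T3: "(\<Sum>(u, w)\<in>(\<lambda>v. (VN v, Snk)) ` A. cap V E h u w) = ereal (real (card A) * (real h * rho_star V E h))"
proof -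
  have "(\<Sum>(u, w)\<in>(\<lambda>v. (VN v, Snk)) ` A. cap V E h u w) = (\<Sum>v\<in>A. cap V E h (VN v) Snk)"
    by (subst sum.reindex) (auto simp: inj_on_def)
  also have "\<dots> = (\<Sum>v\<in>A. ereal (real h * rho_star V E h))" by (simp add: cap_def)
  also have "\<dots> = ereal (real (card A) * (real h * rho_star V E h))" by simp
  finally show ?thesis .
qed

lemma sum_T7:
  assumes "\<And>v l. (v, l) \<in> C \<Longrightarrow> v \<notin> l \<and> insert v l \<in> cliques V E h"
  shows "(\<Sum>(u, w)\<in>(\<lambda>(v, l). (VN v, LN l)) ` C. cap V E h u w) = ereal (real (card C))"
proof -
  have "(\<Sum>(u, w)\<in>(\<lambda>(v, l). (VN v, LN l)) ` C. cap V E h u w) = (\<Sum>(v, l)\<in>C. cap V E h (VN v) (LN l))"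
    by (subst sum.reindex) (auto simp: inj_on_def case_prod_beta)
  also have "\<dots> = (\<Sum>(v, l)\<in>C. ereal 1)"
    using assms by (intro sum.cong refl) (auto simp: cap_def)
  also have "\<dots> = ereal (real (card C))" by (simp add: case_prod_beta)
  finally show ?thesis .
qed

lemma cut_lower:
  assumes Y: "is_st_cut V E h Y"
  defines "A \<equiv> {v \<in> V. VN v \<in> Y}"
  shows "ereal (real (card (Iout A)) + real (card (Imix A)) + real (card A) * (real h * rho_star V E h))
         \<le> cut_cap V E h Y"
proof (cases "\<exists>l\<in>Lam V E h. LN l \<in> Y \<and> \<not> l \<subseteq> A")
  case True
  then obtain l v where l: "l \<in> Lam V E h" "LN l \<in> Y" "v \<in> l" "v \<notin> A" by blast
  have vV: "v \<in> V" using Lam_sub[OF l(1)] l(3) by blast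
  have nY: "VN v \<notin> Y" using l(4) vV by (simp add: A_def)
  have C: "(LN l, VN v) \<in> crossing Y" using netE_lv[OF l(1) l(3)] l(2) nY by (simp add: crossing_def)
  have "cap V E h (LN l) (VN v) = \<infinity>" using l(3) by (simp add: cap_def)
  then have "cut_cap V E h Y = \<infinity>" unfolding cut_cap_eq sum_Pinfty
    using fin_crossing C by (intro conjI bexI[of _ "(LN l, VN v)"]) auto
  then show ?thesis by simp
next
  case False
  then have H: "\<And>l. l \<in> Lam V E h \<Longrightarrow> LN l \<in> Y \<Longrightarrow> l \<subseteq> A" by blast
  have sY: "Src \<in> Y" and tY: "Snk \<notin> Y" using Y by (auto simp: is_st_cut_def)
  have AV: "A \<subseteq> V" by (auto simp: A_def)
  define C7 where "C7 = {(v, l). v \<in> A \<and> l \<in> Lam V E h \<and> LN l \<notin> Y \<and> v \<notin> l \<and> insert v l \<in> cliques V E h}"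
  define T1 where "T1 = (\<lambda>v. (Src :: 'a fnode, VN v)) ` (V - A)"
  define T3 where "T3 = (\<lambda>v. (VN v, Snk :: 'a fnode)) ` A"
  define T7 where "T7 = (\<lambda>(v, l). (VN v, LN l)) ` C7"
  have finA: "finite A" using AV finV by (rule finite_subset)
  have finC7: "finite C7"
  proof (rule finite_subset)
    show "C7 \<subseteq> A \<times> Lam V E h" by (auto simp: C7_def)
    show "finite (A \<times> Lam V E h)" using finA fin_Lam by simp
  qed
  have finT: "finite T1" "finite T3" "finite T7"
    using finV finA finC7 by (simp_all add: T1_def T3_def T7_def)
  have sub1: "T1 \<subseteq> crossing Y"
  proof
    fix x assume "x \<in> T1"
    then obtain v where v: "x = (Src, VN v)" "v \<in> V" "v \<notin> A" by (auto simp: T1_def)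
    then have "VN v \<notin> Y" by (simp add: A_def)
    then show "x \<in> crossing Y" using v netE_src[OF v(2)] sY by (simp add: crossing_def)
  qed
  have sub3: "T3 \<subseteq> crossing Y"
  proof
    fix x assume "x \<in> T3"
    then obtain v where v: "x = (VN v, Snk)" "v \<in> A" by (auto simp: T3_def)
    then have "VN v \<in> Y" "v \<in> V" by (simp_all add: A_def)
    then show "x \<in> crossing Y" using v netE_snk tY by (simp add: crossing_def)
  qed
  have sub7: "T7 \<subseteq> crossing Y"
  proof
    fix x assume "x \<in> T7"
    then obtain v l where v: "x = (VN v, LN l)" "(v, l) \<in> C7" by (auto simp: T7_def)
    then have vl: "v \<in> A" "l \<in> Lam V E h" "LN l \<notin> Y" "v \<notin> l" "insert v l \<in> cliques V E h"
      by (auto simp: C7_def)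
    then have "VN v \<in> Y" "v \<in> V" by (simp_all add: A_def)
    then show "x \<in> crossing Y" using v vl netE_vl[OF vl(2) _ vl(5) vl(4)] by (simp add: crossing_def)
  qed
  have d1: "T1 \<inter> T3 = {}" "(T1 \<union> T3) \<inter> T7 = {}" by (auto simp: T1_def T3_def T7_def)
  have le1: "(\<Sum>(u, w)\<in>T1 \<union> T3 \<union> T7. cap V E h u w) \<le> cut_cap V E h Y"
    unfolding cut_cap_eq using sub1 sub3 sub7 by (intro sum_mono2 fin_crossing cap_nonneg') auto
  have "(\<Sum>(u, w)\<in>T1 \<union> T3 \<union> T7. cap V E h u w) =
      (\<Sum>(u, w)\<in>T1. cap V E h u w) + (\<Sum>(u, w)\<in>T3. cap V E h u w) + (\<Sum>(u, w)\<in>T7. cap V E h u w)"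
    using finT d1 by (simp add: sum.union_disjoint)
  also have "\<dots> = ereal (real (card (Iout A))) + ereal (real (card A) * (real h * rho_star V E h)) + ereal (real (card C7))"
    unfolding T1_def T3_def sum_T1 sum_T3
    unfolding T7_def by (subst sum_T7) (auto simp: C7_def)
  also have "\<dots> = ereal (real (card (Iout A)) + real (card A) * (real h * rho_star V E h) + real (card C7))"
    by simp
  finally have eqT: "(\<Sum>(u, w)\<in>T1 \<union> T3 \<union> T7. cap V E h u w) = ereal (real (card (Iout A)) + real (card A) * (real h * rho_star V E h) + real (card C7))" .
  have cardle: "card (Imix A) \<le> card C7"
  proof (rule card_inj_on_le[OF _ _ finC7])
    show "inj_on (\<lambda>(v, K). (v, K - {v})) (Imix A)"
    proof (rule inj_onI)
      fix x y assume x: "x \<in> Imix A" and y: "y \<in> Imix A"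
        and eq: "(case x of (v, K) \<Rightarrow> (v, K - {v})) = (case y of (v, K) \<Rightarrow> (v, K - {v}))"
      obtain v K where xv: "x = (v, K)" by (cases x)
      obtain v' K' where yv: "y = (v', K')" by (cases y)
      have "v \<in> K" "v' \<in> K'" using x y xv yv by (auto simp: Imix_def)
      moreover have "v = v'" "K - {v} = K' - {v'}" using eq xv yv by auto
      ultimately have "K = K'" by (metis insert_Diff)
      then show "x = y" using xv yv \<open>v = v'\<close> by simp
    qed
    show "(\<lambda>(v, K). (v, K - {v})) ` Imix A \<subseteq> C7"
    proof
      fix z assume "z \<in> (\<lambda>(v, K). (v, K - {v})) ` Imix A"
      then obtain v K where z: "z = (v, K - {v})" and vK: "(v, K) \<in> Imix A" by auto
      have K: "K \<in> cliques V E h" "v \<in> K" "v \<in> A" "\<not> K \<subseteq> A" using vK by (auto simp: Imix_def)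
      have L: "K - {v} \<in> Lam V E h" by (rule clique_remove[OF K(1) K(2)])
      have nY: "LN (K - {v}) \<notin> Y"
      proof
        assume "LN (K - {v}) \<in> Y"
        then have "K - {v} \<subseteq> A" using H[OF L] by simp
        then show False using K by auto
      qed
      have "insert v (K - {v}) = K" using K(2) by auto
      then show "z \<in> C7" using z K L nY by (simp add: C7_def)
    qed
  qed
  have "ereal (real (card (Iout A)) + real (card (Imix A)) + real (card A) * (real h * rho_star V E h))
     \<le> ereal (real (card (Iout A)) + real (card A) * (real h * rho_star V E h) + real (card C7))"
    using cardle by simp
  also have "\<dots> \<le> cut_cap V E h Y" using le1 eqT by simp
  finally show ?thesis .
qed

end



context net begin

lemma cut_upper:
  assumes AV: "A \<subseteq> V"
  defines "SA \<equiv> {Src} \<union> VN ` A \<union> LN ` {l \<in> Lam V E h. l \<subseteq> A}"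
  shows "is_st_cut V E h SA"
    and "cut_cap V E h SA \<le> ereal (real (card (Iout A)) + real (card (Imix A)) + real (card A) * (real h * rho_star V E h))"
proof -
  have memV: "VN v \<in> SA \<longleftrightarrow> v \<in> A" for v by (auto simp: SA_def)
  have memL: "LN l \<in> SA \<longleftrightarrow> l \<in> Lam V E h \<and> l \<subseteq> A" for l by (auto simp: SA_def)
  have memS: "Src \<in> SA" "Snk \<notin> SA" by (auto simp: SA_def)
  show "is_st_cut V E h SA"
    using AV memS unfolding is_st_cut_def SA_def netV_def by auto
  define D7 where "D7 = {(v, l). v \<in> A \<and> l \<in> Lam V E h \<and> \<not> l \<subseteq> A \<and> v \<notin> l \<and> insert v l \<in> cliques V E h}"
  define T1 where "T1 = (\<lambda>v. (Src :: 'a fnode, VN v)) ` (V - A)"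
  define T3 where "T3 = (\<lambda>v. (VN v, Snk :: 'a fnode)) ` A"
  define T7 where "T7 = (\<lambda>(v, l). (VN v, LN l)) ` D7"
  have finA: "finite A" using AV finV by (rule finite_subset)
  have finD7: "finite D7"
  proof (rule finite_subset)
    show "D7 \<subseteq> A \<times> Lam V E h" by (auto simp: D7_def)
    show "finite (A \<times> Lam V E h)" using finA fin_Lam by simp
  qed
  have finT: "finite T1" "finite T3" "finite T7"
    using finV finA finD7 by (simp_all add: T1_def T3_def T7_def)
  let ?T = "T1 \<union> T3 \<union> T7"
  have zero: "cap V E h u w = 0" if uw: "(u, w) \<in> crossing SA" and nT: "(u, w) \<notin> ?T" for u w
  proof -
    have E: "(u, w) \<in> netE V E h" and u: "u \<in> SA" and w: "w \<notin> SA" using uw by (auto simp: crossing_def)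
    from E show ?thesis
    proof (cases rule: netE_E)
      case (sv v)
      then have "(u, w) \<in> T1" using w memV by (auto simp: T1_def)
      then show ?thesis using nT by blast
    next
      case (vs v) then show ?thesis using w memS by simp
    next
      case (vt v)
      then have "(u, w) \<in> T3" using u memV by (auto simp: T3_def)
      then show ?thesis using nT by blast
    next
      case (tv v) then show ?thesis using u memS by simp
    next
      case (lv l v)
      then have "l \<subseteq> A" using u memL by simp
      then have "v \<in> A" using lv by blast
      then show ?thesis using lv w memV by simp
    next
      case (vl0 l v) then show ?thesis by (simp add: cap_def)
    next
      case (vl l v)
      then have "(v, l) \<in> D7" using u w memV memL by (auto simp: D7_def)
      then have "(u, w) \<in> T7" using vl by (auto simp: T7_def)
      then show ?thesis using nT by blast
    next
      case (lv0 l v) then show ?thesis by (simp add: cap_def)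
    qed
  qed
  have "cut_cap V E h SA = (\<Sum>(u, w)\<in>crossing SA \<inter> ?T. cap V E h u w)"
    unfolding cut_cap_eq
  proof (rule sum.mono_neutral_right)
    show "finite (crossing SA)" by (rule fin_crossing)
    show "crossing SA \<inter> ?T \<subseteq> crossing SA" by blast
    show "\<forall>i\<in>crossing SA - crossing SA \<inter> ?T. (case i of (u, w) \<Rightarrow> cap V E h u w) = 0"
      using zero by auto
  qed
  also have "\<dots> \<le> (\<Sum>(u, w)\<in>?T. cap V E h u w)"
    using finT by (intro sum_mono2 cap_nonneg') auto
  also have "\<dots> = (\<Sum>(u, w)\<in>T1. cap V E h u w) + (\<Sum>(u, w)\<in>T3. cap V E h u w) + (\<Sum>(u, w)\<in>T7. cap V E h u w)"
  proof -
    have d1: "T1 \<inter> T3 = {}" "(T1 \<union> T3) \<inter> T7 = {}" by (auto simp: T1_def T3_def T7_def)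
    then show ?thesis using finT by (simp add: sum.union_disjoint)
  qed
  also have "\<dots> = ereal (real (card (Iout A))) + ereal (real (card A) * (real h * rho_star V E h)) + ereal (real (card D7))"
    unfolding T1_def T3_def sum_T1 sum_T3
    unfolding T7_def by (subst sum_T7) (auto simp: D7_def)
  also have "\<dots> = ereal (real (card (Iout A)) + real (card A) * (real h * rho_star V E h) + real (card D7))"
    by simp
  also have "\<dots> \<le> ereal (real (card (Iout A)) + real (card (Imix A)) + real (card A) * (real h * rho_star V E h))"
  proof -
    have "card D7 \<le> card (Imix A)"
    proof (rule card_inj_on_le[OF _ _ fin_I(2)])
      show "inj_on (\<lambda>(v, l). (v, insert v l)) D7"
      proof (rule inj_onI)
        fix x y assume x: "x \<in> D7" and y: "y \<in> D7"
          and eq: "(case x of (v, l) \<Rightarrow> (v, insert v l)) = (case y of (v, l) \<Rightarrow> (v, insert v l))"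
        obtain v l where xv: "x = (v, l)" by (cases x)
        obtain v' l' where yv: "y = (v', l')" by (cases y)
        have "v \<notin> l" "v' \<notin> l'" using x y xv yv by (auto simp: D7_def)
        moreover have "v = v'" "insert v l = insert v' l'" using eq xv yv by auto
        ultimately have "l = l'" by (metis Diff_insert_absorb)
        then show "x = y" using xv yv \<open>v = v'\<close> by simp
      qed
      show "(\<lambda>(v, l). (v, insert v l)) ` D7 \<subseteq> Imix A"
        by (auto simp: D7_def Imix_def)
    qed
    then show ?thesis by simp
  qed
  finally show "cut_cap V E h SA \<le> ereal (real (card (Iout A)) + real (card (Imix A)) + real (card A) * (real h * rho_star V E h))" .
qed

end



theorem lemma3:
  fixes V :: "'a set" and E :: "'a set set" and h :: nat
    and f :: "'a fnode \<Rightarrow> 'a fnode \<Rightarrow> real" and V1 :: "'a set"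
  assumes "simple_graph V E" and "h \<ge> 2"
    and "is_max_flow V E h f"
    and "V1 \<subseteq> V" and "V1 \<noteq> {}"
  defines "S \<equiv> {Src} \<union> VN ` V1 \<union> LN ` {l \<in> Lam V E h. l \<subseteq> V1}"
  shows "(rho V E h V1 = rho_star V E h \<longleftrightarrow> is_min_st_cut V E h S)
       \<and> (is_min_st_cut V E h S \<longleftrightarrow>
            \<not> (\<exists>u\<in>S. \<exists>w\<in>netV V E h - S. residual_arc V E h f u w))"
proof -
  note Sdef = assms(6)
  have Vne: "V \<noteq> {}" using assms(4,5) by blast
  interpret net V E h using assms(1,2) Vne by unfold_locales
  define m where "m = real h * real (mu V E h V)"
  have hpos: "real h > 0" using assms(2) by simp
  have msplit: "real (card (Iout A)) + real (card (Imix A)) + real (card (Iin A)) = m" for A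
    using card_split[of A] unfolding m_def by (metis of_nat_add of_nat_mult)
  have lower: "ereal m \<le> cut_cap V E h Y" if Y: "is_st_cut V E h Y" for Y
  proof -
    define A where "A = {v \<in> V. VN v \<in> Y}"
    have AV: "A \<subseteq> V" by (auto simp: A_def)
    have "real (card (Iin A)) \<le> real (card A) * (real h * rho_star V E h)"
    proof -
      have "real (card (Iin A)) = real h * real (mu V E h A)" by (simp add: card_Iin)
      also have "\<dots> \<le> real h * (real (card A) * rho_star V E h)"
        using mu_le[OF AV] hpos by (intro mult_left_mono) auto
      finally show ?thesis by (simp add: algebra_simps)
    qed
    then have "ereal m \<le> ereal (real (card (Iout A)) + real (card (Imix A)) + real (card A) * (real h * rho_star V E h))"
      using msplit[of A] by simp
    also have "\<dots> \<le> cut_cap V E h Y" using cut_lower[OF Y] unfolding A_def .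
    finally show ?thesis .
  qed
  define S0 where "S0 = {Src} \<union> VN ` {} \<union> LN ` {l \<in> Lam V E h. l \<subseteq> {}}"
  have S0: "is_st_cut V E h S0" "cut_cap V E h S0 \<le> ereal m"
  proof -
    show "is_st_cut V E h S0" using cut_upper(1)[of "{}"] by (simp add: S0_def)
    have "cut_cap V E h S0 \<le> ereal (real (card (Iout {})) + real (card (Imix {})) + real (card ({} :: 'a set)) * (real h * rho_star V E h))"
      using cut_upper(2)[of "{}"] by (simp add: S0_def)
    also have "\<dots> \<le> ereal m" using msplit[of "{}"] by simp
    finally show "cut_cap V E h S0 \<le> ereal m" .
  qed
  have SS: "is_st_cut V E h S"
    "cut_cap V E h S \<le> ereal (real (card (Iout V1)) + real (card (Imix V1)) + real (card V1) * (real h * rho_star V E h))"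
    using cut_upper[OF assms(4)] unfolding Sdef by auto
  have AS: "{v \<in> V. VN v \<in> S} = V1" using assms(4) unfolding Sdef by auto
  have SL: "ereal (real (card (Iout V1)) + real (card (Imix V1)) + real (card V1) * (real h * rho_star V E h)) \<le> cut_cap V E h S"
    using cut_lower[OF SS(1)] unfolding AS .
  have finV1: "finite V1" using assms(4) finV by (rule finite_subset)
  have cV1: "real (card V1) > 0" using finV1 assms(5) by (simp add: card_gt_0_iff)
  have IinV1: "real (card (Iin V1)) = real h * real (mu V E h V1)" by (simp add: card_Iin)
  have p12: "rho V E h V1 = rho_star V E h \<longleftrightarrow> is_min_st_cut V E h S"
  proof
    assume r: "rho V E h V1 = rho_star V E h"
    then have "real (mu V E h V1) = real (card V1) * rho_star V E h"
      using cV1 by (simp add: rho_def field_simps)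
    then have "real (card V1) * (real h * rho_star V E h) = real (card (Iin V1))"
      using IinV1 by (simp add: algebra_simps)
    then have "cut_cap V E h S \<le> ereal m" using SS(2) msplit[of V1] by simp
    then show "is_min_st_cut V E h S"
      unfolding is_min_st_cut_def using SS(1) lower order_trans by blast
  next
    assume "is_min_st_cut V E h S"
    then have "cut_cap V E h S \<le> cut_cap V E h S0" using S0(1) by (simp add: is_min_st_cut_def)
    then have "cut_cap V E h S \<le> ereal m" using S0(2) by (rule order_trans)
    then have "ereal (real (card (Iout V1)) + real (card (Imix V1)) + real (card V1) * (real h * rho_star V E h)) \<le> ereal m"
      using SL by (rule order_trans[rotated])
    then have "real (card V1) * (real h * rho_star V E h) \<le> real (card (Iin V1))"
      using msplit[of V1] by simp
    then have "real h * (real (card V1) * rho_star V E h) \<le> real h * real (mu V E h V1)"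
      using IinV1 by (simp add: algebra_simps)
    then have "real (card V1) * rho_star V E h \<le> real (mu V E h V1)"
      using hpos by simp
    then have "rho_star V E h \<le> rho V E h V1"
      using cV1 by (simp add: rho_def field_simps)
    moreover have "rho V E h V1 \<le> rho_star V E h" using rho_le assms(4,5) by blast
    ultimately show "rho V E h V1 = rho_star V E h" by simp
  qed
  show ?thesis using p12 cut23[OF assms(3) SS(1)] by blast
qed



end
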